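(* Let $A$ be a nonempty set and let $G\subseteq A^A$ be a group under composition of maps, with identity element $e$. Define the equivalence relation $\sim$ on $A$ by $a\sim b$ iff $e(a)=e(b)$, write $[a]$ for the class of $a$, and for $f\in G$ let $\hat f:A/\sim\,\to A/\sim$ be given by $\hat f([x])=[f(x)]$. Set $\hat G=\{\hat f\mid f\in G\}$. Then $\hat G$ is a permutation group on $A/\sim$, and the map $\rho:G\to\hat G$, $f\mapsto\hat f$, is a group isomorphism.
   Context: $A^A$ denotes the set of all maps $A\to A$. A permutation group on a set $X$ is a group of bijections $X\to X$ under composition. The identity element $e$ of $G$ need not be the identity map of $A$. *)

theory Defs
  imports "HOL-Algebra.Algebra" "HOL-Library.FuncSet"
begin

definition comp_monoid :: "'a set \<Rightarrow> ('a \<Rightarrow> 'a) set \<Rightarrow> ('a \<Rightarrow> 'a) \<Rightarrow> ('a \<Rightarrow> 'a) monoid"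
  where "comp_monoid A G e = \<lparr>carrier = G, monoid.mult = (\<lambda>f g. compose A f g), one = e\<rparr>"

definition eq_rel :: "'a set \<Rightarrow> ('a \<Rightarrow> 'a) \<Rightarrow> ('a \<times> 'a) set"
  where "eq_rel A e = {(a, b). a \<in> A \<and> b \<in> A \<and> e a = e b}"

definition hat :: "'a set \<Rightarrow> ('a \<Rightarrow> 'a) \<Rightarrow> ('a \<Rightarrow> 'a) \<Rightarrow> 'a set \<Rightarrow> 'a set"
  where "hat A e f = restrict (\<lambda>Cl. Image (eq_rel A e) {f (SOME x. x \<in> Cl)}) (A // eq_rel A e)"

end

theory Submission
  imports Defs
begin

lemma cm_basic:
  assumes G: "G \<subseteq> A \<rightarrow>\<^sub>E A" and grp: "group (comp_monoid A G e)"
  shows "e \<in> G"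
    and "\<And>f g. f \<in> G \<Longrightarrow> g \<in> G \<Longrightarrow> compose A f g \<in> G"
    and "\<And>f x. f \<in> G \<Longrightarrow> x \<in> A \<Longrightarrow> e (f x) = f x"
    and "\<And>f x. f \<in> G \<Longrightarrow> x \<in> A \<Longrightarrow> f (e x) = f x"
    and "\<And>f. f \<in> G \<Longrightarrow> \<exists>g\<in>G. compose A g f = e \<and> compose A f g = e"
proof -
  interpret group "comp_monoid A G e" by (rule grp)
  show "e \<in> G" using one_closed by (simp add: comp_monoid_def)
  show "\<And>f g. f \<in> G \<Longrightarrow> g \<in> G \<Longrightarrow> compose A f g \<in> G"
    using m_closed by (simp add: comp_monoid_def)
  show "e (f x) = f x" if "f \<in> G" "x \<in> A" for f x
  proof -
    have "compose A e f = f" using l_one[of f] that by (simp add: comp_monoid_def)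
    hence "compose A e f x = f x" by simp
    thus ?thesis using that by (simp add: compose_def)
  qed
  show "f (e x) = f x" if "f \<in> G" "x \<in> A" for f x
  proof -
    have "compose A f e = f" using r_one[of f] that by (simp add: comp_monoid_def)
    hence "compose A f e x = f x" by simp
    thus ?thesis using that by (simp add: compose_def)
  qed
  show "\<exists>g\<in>G. compose A g f = e \<and> compose A f g = e" if "f \<in> G" for f
    using that l_inv r_inv inv_closed by (metis comp_monoid_def monoid.select_convs partial_object.select_convs)
qed

lemma equiv_rel: "equiv A (eq_rel A e)"
  by (auto simp: equiv_def refl_on_def sym_def trans_def eq_rel_def)

lemma hat_class:
  assumes G: "G \<subseteq> A \<rightarrow>\<^sub>E A" and grp: "group (comp_monoid A G e)"
    and f: "f \<in> G" and a: "a \<in> A"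
  shows "hat A e f (eq_rel A e `` {a}) = eq_rel A e `` {f a}"
proof -
  let ?R = "eq_rel A e"
  have q: "?R `` {a} \<in> A // ?R" using a by (rule quotientI)
  have "a \<in> ?R `` {a}" using a by (auto simp: eq_rel_def)
  hence xin: "(SOME x. x \<in> ?R `` {a}) \<in> ?R `` {a}" by (rule someI)
  define x where "x = (SOME x. x \<in> ?R `` {a})"
  have x: "x = (SOME x. x \<in> ?R `` {a})" "x \<in> A" "e a = e x"
    using xin unfolding x_def[symmetric] by (auto simp: eq_rel_def)
  have "f x = f a" using cm_basic(4)[OF G grp f] x a by metis
  thus ?thesis using q x by (simp add: hat_def)
qed

lemma hat_ext: "hat A e f \<in> extensional (A // eq_rel A e)"
  by (simp add: hat_def)

lemma hat_compose:
  assumes G: "G \<subseteq> A \<rightarrow>\<^sub>E A" and grp: "group (comp_monoid A G e)"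
    and f: "f \<in> G" and g: "g \<in> G"
  shows "hat A e (compose A f g) = compose (A // eq_rel A e) (hat A e f) (hat A e g)"
proof (rule extensionalityI[OF hat_ext])
  show "compose (A // eq_rel A e) (hat A e f) (hat A e g) \<in> extensional (A // eq_rel A e)"
    by (simp add: compose_def)
  fix C assume "C \<in> A // eq_rel A e"
  then obtain a where a: "a \<in> A" "C = eq_rel A e `` {a}" by (auto elim: quotientE)
  have ga: "g a \<in> A" using G g a by auto
  have "compose A f g \<in> G" using cm_basic(2)[OF G grp f g] .
  thus "hat A e (compose A f g) C = compose (A // eq_rel A e) (hat A e f) (hat A e g) C"
    using a ga hat_class[OF G grp] f g quotientI[OF a(1)]
    by (simp add: compose_def)
qed

lemma hat_e:
  assumes G: "G \<subseteq> A \<rightarrow>\<^sub>E A" and grp: "group (comp_monoid A G e)"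
  shows "hat A e e = (\<lambda>x\<in>A // eq_rel A e. x)"
proof (rule extensionalityI[OF hat_ext])
  show "(\<lambda>x\<in>A // eq_rel A e. x) \<in> extensional (A // eq_rel A e)" by simp
  fix C assume "C \<in> A // eq_rel A e"
  then obtain a where a: "a \<in> A" "C = eq_rel A e `` {a}" by (auto elim: quotientE)
  have "e (e a) = e a" using cm_basic(3)[OF G grp cm_basic(1)[OF G grp] a(1)] .
  hence "eq_rel A e `` {e a} = eq_rel A e `` {a}"
    using a G cm_basic(1)[OF G grp] by (auto simp: eq_rel_def)
  thus "hat A e e C = (\<lambda>x\<in>A // eq_rel A e. x) C"
    using hat_class[OF G grp cm_basic(1)[OF G grp] a(1)] a quotientI[OF a(1)] by simp
qed

lemma hat_Bij:
  assumes G: "G \<subseteq> A \<rightarrow>\<^sub>E A" and grp: "group (comp_monoid A G e)"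
    and f: "f \<in> G"
  shows "hat A e f \<in> Bij (A // eq_rel A e)"
proof -
  let ?S = "A // eq_rel A e"
  obtain g where g: "g \<in> G" "compose A g f = e" "compose A f g = e"
    using cm_basic(5)[OF G grp f] by blast
  have c1: "compose ?S (hat A e g) (hat A e f) = (\<lambda>x\<in>?S. x)"
    using hat_compose[OF G grp g(1) f] g hat_e[OF G grp] by simp
  have c2: "compose ?S (hat A e f) (hat A e g) = (\<lambda>x\<in>?S. x)"
    using hat_compose[OF G grp f g(1)] g hat_e[OF G grp] by simp
  have into: "hat A e h \<in> ?S \<rightarrow> ?S" if "h \<in> G" for h
  proof
    fix C assume "C \<in> ?S"
    then obtain a where a: "a \<in> A" "C = eq_rel A e `` {a}" by (auto elim: quotientE)
    have "h a \<in> A" using G that a by auto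
    thus "hat A e h C \<in> ?S" using hat_class[OF G grp that a(1)] a quotientI by metis
  qed
  have "inj_on (hat A e f) ?S"
  proof (rule inj_onI)
    fix x y assume "x \<in> ?S" "y \<in> ?S" "hat A e f x = hat A e f y"
    hence "compose ?S (hat A e g) (hat A e f) x = compose ?S (hat A e g) (hat A e f) y"
      by (simp add: compose_def)
    thus "x = y" using c1 \<open>x \<in> ?S\<close> \<open>y \<in> ?S\<close> by simp
  qed
  moreover have "hat A e f ` ?S = ?S"
  proof
    show "hat A e f ` ?S \<subseteq> ?S" using into[OF f] by auto
    show "?S \<subseteq> hat A e f ` ?S"
    proof
      fix x assume x: "x \<in> ?S"
      have "hat A e f (hat A e g x) = x" using x fun_cong[OF c2, of x] by (simp add: compose_def)
      moreover have "hat A e g x \<in> ?S" using into[OF g(1)] x by auto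
      ultimately show "x \<in> hat A e f ` ?S" by (metis image_eqI)
    qed
  qed
  ultimately show ?thesis unfolding Bij_def bij_betw_def using hat_ext[of A e f] by blast
qed

theorem theorem2p8:
  fixes A :: "'a set" and G :: "('a \<Rightarrow> 'a) set" and e :: "'a \<Rightarrow> 'a"
  assumes "A \<noteq> {}"
    and "G \<subseteq> A \<rightarrow>\<^sub>E A"
    and "group (comp_monoid A G e)"
  shows "subgroup (hat A e ` G) (BijGroup (A // eq_rel A e))
       \<and> hat A e \<in> iso (comp_monoid A G e)
           ((BijGroup (A // eq_rel A e))\<lparr>carrier := hat A e ` G\<rparr>)"
proof -
  note G = assms(2) and grp = assms(3)
  let ?S = "A // eq_rel A e"
  have hom: "hat A e \<in> hom (comp_monoid A G e) (BijGroup ?S)"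
  proof (rule homI)
    fix f assume "f \<in> carrier (comp_monoid A G e)"
    hence "f \<in> G" by (simp add: comp_monoid_def)
    thus "hat A e f \<in> carrier (BijGroup ?S)" using hat_Bij[OF G grp] by (simp add: BijGroup_def)
  next
    fix f g assume "f \<in> carrier (comp_monoid A G e)" "g \<in> carrier (comp_monoid A G e)"
    hence "f \<in> G" "g \<in> G" by (simp_all add: comp_monoid_def)
    thus "hat A e (f \<otimes>\<^bsub>comp_monoid A G e\<^esub> g) = hat A e f \<otimes>\<^bsub>BijGroup ?S\<^esub> hat A e g"
    proof -
      have "hat A e (f \<otimes>\<^bsub>comp_monoid A G e\<^esub> g) = hat A e (compose A f g)"
        by (simp add: comp_monoid_def)
      also have "\<dots> = compose ?S (hat A e f) (hat A e g)" using hat_compose[OF G grp \<open>f \<in> G\<close> \<open>g \<in> G\<close>] .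
      also have "\<dots> = hat A e f \<otimes>\<^bsub>BijGroup ?S\<^esub> hat A e g"
        using hat_Bij[OF G grp \<open>f \<in> G\<close>] hat_Bij[OF G grp \<open>g \<in> G\<close>] by (simp add: BijGroup_def)
      finally show ?thesis .
    qed
  qed
  have gh: "group_hom (comp_monoid A G e) (BijGroup ?S) (hat A e)"
    using grp group_BijGroup hom by (simp add: group_hom_def group_hom_axioms_def)
  have sub: "subgroup (hat A e ` G) (BijGroup ?S)"
  proof -
    have "carrier (comp_monoid A G e) = G" by (simp add: comp_monoid_def)
    thus ?thesis using group_hom.img_is_subgroup[OF gh] by metis
  qed
  have inj: "inj_on (hat A e) G"
  proof (rule inj_onI)
    fix f g assume f: "f \<in> G" and g: "g \<in> G" and eq: "hat A e f = hat A e g"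
    show "f = g"
    proof (rule extensionalityI[of _ A])
      show "f \<in> extensional A" "g \<in> extensional A" using f g G by (auto simp: PiE_def)
      fix x assume x: "x \<in> A"
      have fx: "f x \<in> A" using f G x by blast
      have gx: "g x \<in> A" using g G x by blast
      have "eq_rel A e `` {f x} = eq_rel A e `` {g x}"
        using hat_class[OF G grp f x] hat_class[OF G grp g x] eq by simp
      hence "(f x, g x) \<in> eq_rel A e"
        using eq_equiv_class_iff[OF equiv_rel fx gx] by simp
      hence "e (f x) = e (g x)" by (simp add: eq_rel_def)
      moreover have "e (f x) = f x" by (rule cm_basic(3)[OF G grp f x])
      moreover have "e (g x) = g x" by (rule cm_basic(3)[OF G grp g x])
      ultimately show "f x = g x" by simp
    qed
  qed
  have "hat A e \<in> iso (comp_monoid A G e) ((BijGroup ?S)\<lparr>carrier := hat A e ` G\<rparr>)"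
  proof -
    have "hat A e \<in> hom (comp_monoid A G e) ((BijGroup ?S)\<lparr>carrier := hat A e ` G\<rparr>)"
      using hom unfolding hom_def by (simp add: comp_monoid_def)
    moreover have "bij_betw (hat A e) (carrier (comp_monoid A G e)) (hat A e ` G)"
      using inj by (simp add: comp_monoid_def bij_betw_def)
    ultimately show ?thesis unfolding iso_def by simp
  qed
  with sub show ?thesis by simp
qed

end
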